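(* Let $G$ be a simple graph on $n$ vertices with $cM_2(G)\ge cM_2(H)$ for every simple graph $H$ on $n$ vertices, and let $F$, $X$, $Y$ be as defined in the context. If $u\in X$, $v\in Y$ and $uv\in E(G)$, then $\overrightarrow{uv}$ is an arc of $F$ (in particular $d_G(u)>d_G(v)$).
   Context: All graphs are finite and simple; $d_G(u)$ is the degree of $u$ and $cM_2(G)=\sum_{uv\in E(G)}|d_G(u)^2-d_G(v)^2|$. The canonical mixed graph $F$ of $G$ has vertex set $V(G)$; for each edge $uv\in E(G)$: if $d_G(u)>d_G(v)$ then $F$ contains the arc $\overrightarrow{uv}$, and if $d_G(u)=d_G(v)$ then $F$ contains the undirected edge $uv$. $d^+_F(u)$ (resp. $d^-_F(u)$) is the number of arcs of $F$ with tail (resp. head) $u$. $X=\{u\in V(G): d^+_F(u)\ge d^-_F(u)\}$ and $Y=\{u\in V(G): d^+_F(u)< d^-_F(u)\}$. *)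

theory Defs
  imports Main
begin

definition simple_graph :: "nat \<Rightarrow> nat set set \<Rightarrow> bool" where
  "simple_graph n E \<longleftrightarrow> E \<subseteq> {{u, v} | u v. u < n \<and> v < n \<and> u \<noteq> v}"

definition deg :: "nat set set \<Rightarrow> nat \<Rightarrow> nat" where
  "deg E u = card {v. {u, v} \<in> E}"

definition cM2 :: "nat set set \<Rightarrow> int" where
  "cM2 E = (\<Sum>(u, v) \<in> {(u, v). {u, v} \<in> E \<and> u < v}.
              \<bar>int (deg E u) ^ 2 - int (deg E v) ^ 2\<bar>)"

text \<open>Arcs of the canonical mixed graph F.\<close>
definition arc :: "nat set set \<Rightarrow> nat \<Rightarrow> nat \<Rightarrow> bool" where
  "arc E u v \<longleftrightarrow> {u, v} \<in> E \<and> deg E u > deg E v"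

definition outdeg :: "nat set set \<Rightarrow> nat \<Rightarrow> nat" where
  "outdeg E u = card {v. arc E u v}"

definition indeg :: "nat set set \<Rightarrow> nat \<Rightarrow> nat" where
  "indeg E u = card {v. arc E v u}"

definition Xset :: "nat \<Rightarrow> nat set set \<Rightarrow> nat set" where
  "Xset n E = {u. u < n \<and> outdeg E u \<ge> indeg E u}"

definition Yset :: "nat \<Rightarrow> nat set set \<Rightarrow> nat set" where
  "Yset n E = {u. u < n \<and> outdeg E u < indeg E u}"

end

theory Submission
  imports Defs
begin

definition nb :: "nat set set \<Rightarrow> nat \<Rightarrow> nat set" where "nb E x = {y. {x,y} \<in> E}"

lemma deg_nb: "deg E x = card (nb E x)" by (simp add: deg_def nb_def)

lemma sg_edge: "simple_graph n E \<Longrightarrow> {x,y} \<in> E \<Longrightarrow> x \<noteq> y \<and> x < n \<and> y < n"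
  unfolding simple_graph_def by (auto simp: doubleton_eq_iff)

lemma sg_fin_nb: "simple_graph n E \<Longrightarrow> finite (nb E x)"
proof -
  assume a: "simple_graph n E"
  have "nb E x \<subseteq> {..<n}" using sg_edge[OF a] by (auto simp: nb_def)
  then show ?thesis using finite_subset by blast
qed

lemma nb_sym: "y \<in> nb E x \<longleftrightarrow> x \<in> nb E y"
  by (simp add: nb_def insert_commute)

lemma outdeg_eq: "outdeg E u = card {x \<in> nb E u. deg E x < deg E u}"
  unfolding outdeg_def arc_def nb_def by simp

lemma indeg_eq: "indeg E u = card {x \<in> nb E u. deg E x > deg E u}"
  unfolding indeg_def arc_def nb_def by (simp add: insert_commute)

lemma card3: "finite S \<Longrightarrow> card S = card {x\<in>S. f x < (c::nat)} + card {x\<in>S. f x = c} + card {x\<in>S. f x > c}"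
proof -
  assume fs: "finite S"
  have "S = ({x\<in>S. f x < c} \<union> {x\<in>S. f x = c}) \<union> {x\<in>S. f x > c}" by auto
  moreover have "card (({x\<in>S. f x < c} \<union> {x\<in>S. f x = c}) \<union> {x\<in>S. f x > c}) = card ({x\<in>S. f x < c} \<union> {x\<in>S. f x = c}) + card {x\<in>S. f x > c}"
    by (rule card_Un_disjoint) (use fs in auto)
  ultimately have "card S = card ({x\<in>S. f x < c} \<union> {x\<in>S. f x = c}) + card {x\<in>S. f x > c}" by simp
  also have "card ({x\<in>S. f x < c} \<union> {x\<in>S. f x = c}) = card {x\<in>S. f x < c} + card {x\<in>S. f x = c}"
    by (rule card_Un_disjoint) (use fs in auto)
  finally show ?thesis .
qed

lemma exists_w:
  assumes sg: "simple_graph n E" and uX: "outdeg E u \<ge> indeg E u"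
    and vY: "outdeg E v < indeg E v" and e: "{u,v} \<in> E" and ab: "deg E u \<le> deg E v"
  shows "\<exists>w. w \<in> nb E v \<and> w \<noteq> u \<and> w \<notin> nb E u \<and> deg E w \<ge> deg E v"
proof (rule ccontr)
  assume "\<not> ?thesis"
  then have H: "\<And>y. y \<in> nb E v \<Longrightarrow> y \<noteq> u \<Longrightarrow> deg E y \<ge> deg E v \<Longrightarrow> y \<in> nb E u" by blast
  define a where "a = deg E u"
  define b where "b = deg E v"
  define Cl where "Cl = {y \<in> nb E v. deg E y < b}"
  define Ce where "Ce = {y \<in> nb E v. deg E y = b}"
  define Cg where "Cg = {y \<in> nb E v. deg E y > b}"
  define Dl where "Dl = {y \<in> nb E u. deg E y < a}"
  define De where "De = {y \<in> nb E u. deg E y = a}"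
  define Dg where "Dg = {y \<in> nb E u. deg E y > a}"
  have fu: "finite (nb E u)" and fv: "finite (nb E v)" using sg_fin_nb[OF sg] by auto
  have fDg: "finite Dg" "finite De" "finite Cg" "finite Ce" using fu fv by (auto simp: Dg_def De_def Cg_def Ce_def)
  have bsum: "b = card Cl + card Ce + card Cg"
    unfolding b_def Cl_def Ce_def Cg_def deg_nb[of E v] by (rule card3[OF fv])
  have asum: "a = card Dl + card De + card Dg"
    unfolding a_def Dl_def De_def Dg_def deg_nb[of E u] by (rule card3[OF fu])
  have outu: "card Dl \<ge> card Dg" using uX unfolding outdeg_eq indeg_eq Dl_def Dg_def a_def .
  have inv: "card Cl < card Cg" using vY unfolding outdeg_eq indeg_eq Cl_def Cg_def b_def .
  have vu: "v \<in> nb E u" using e by (simp add: nb_def)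
  have uv: "u \<in> nb E v" using vu nb_sym by metis
  have vnv: "v \<notin> nb E v" using sg_edge[OF sg, of v v] by (auto simp: nb_def)
  have "a \<le> b" using ab a_def b_def by simp
  then consider "a < b" | "a = b" by linarith
  then show False
  proof cases
    case 1
    have sub: "insert v (Ce \<union> Cg) \<subseteq> Dg"
    proof
      fix y assume y: "y \<in> insert v (Ce \<union> Cg)"
      show "y \<in> Dg"
      proof (cases "y = v")
        case True then show ?thesis using vu 1 by (simp add: Dg_def b_def)
      next
        case False
        then have y1: "y \<in> nb E v" "deg E y \<ge> b" using y by (auto simp: Ce_def Cg_def)
        then have "y \<noteq> u" using 1 a_def by auto
        then have "y \<in> nb E u" using H y1 b_def by auto
        then show ?thesis using y1 1 by (simp add: Dg_def)
      qed
    qed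
    have "card (insert v (Ce \<union> Cg)) = card Ce + card Cg + 1"
    proof -
      have "v \<notin> Ce \<union> Cg" using vnv by (auto simp: Ce_def Cg_def)
      moreover have "card (Ce \<union> Cg) = card Ce + card Cg"
        by (rule card_Un_disjoint) (use fDg in \<open>auto simp: Ce_def Cg_def\<close>)
      ultimately show ?thesis using fDg by simp
    qed
    moreover have "card (insert v (Ce \<union> Cg)) \<le> card Dg" using card_mono[OF fDg(1) sub] .
    ultimately show False using asum bsum outu inv 1 by linarith
  next
    case 2
    have sub1: "Cg \<subseteq> Dg"
    proof
      fix y assume y: "y \<in> Cg"
      then have y1: "y \<in> nb E v" "deg E y > b" by (auto simp: Cg_def)
      then have "y \<noteq> u" using 2 a_def by auto
      then have "y \<in> nb E u" using H y1 b_def by auto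
      then show "y \<in> Dg" using y1 2 by (simp add: Dg_def)
    qed
    have uCe: "u \<in> Ce" using uv 2 a_def by (simp add: Ce_def)
    have sub2: "insert v ((Ce - {u}) \<union> Cg) \<subseteq> De \<union> Dg"
    proof
      fix y assume y: "y \<in> insert v ((Ce - {u}) \<union> Cg)"
      show "y \<in> De \<union> Dg"
      proof (cases "y = v")
        case True then show ?thesis using vu 2 by (simp add: De_def b_def)
      next
        case False
        then have y1: "y \<in> nb E v" "deg E y \<ge> b" "y \<noteq> u" using y 2 a_def by (auto simp: Ce_def Cg_def)
        then have "y \<in> nb E u" using H y1 b_def by auto
        then show ?thesis using y1 2 by (auto simp: Dg_def De_def)
      qed
    qed
    have "card (insert v ((Ce - {u}) \<union> Cg)) = card Ce + card Cg"
    proof -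
      have "v \<notin> (Ce - {u}) \<union> Cg" using vnv by (auto simp: Ce_def Cg_def)
      moreover have "card ((Ce - {u}) \<union> Cg) = card (Ce - {u}) + card Cg"
        by (rule card_Un_disjoint) (use fDg in \<open>auto simp: Ce_def Cg_def\<close>)
      moreover have "card (Ce - {u}) = card Ce - 1" using uCe fDg by simp
      moreover have "card Ce \<ge> 1" using uCe fDg card_0_eq by fastforce
      ultimately show ?thesis using fDg by simp
    qed
    moreover have "card (insert v ((Ce - {u}) \<union> Cg)) \<le> card (De \<union> Dg)" using card_mono[OF _ sub2] fDg by simp
    moreover have "card (De \<union> Dg) = card De + card Dg"
        by (rule card_Un_disjoint) (use fDg in \<open>auto simp: De_def Dg_def\<close>)
    moreover have "card Cg \<le> card Dg" using card_mono[OF fDg(1) sub1] .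
    ultimately show False using asum bsum outu inv 2 by linarith
  qed
qed

lemma card_filter_sum: "finite S \<Longrightarrow> (\<Sum>x\<in>S. if P x then 1 else 0::int) = int (card {x\<in>S. P x})"
  by (simp add: sum.If_cases Int_def conj_commute)

definition ew :: "nat set set \<Rightarrow> nat set \<Rightarrow> int" where
  "ew E e = \<bar>int (deg E (Min e))^2 - int (deg E (Max e))^2\<bar>"

lemma ew_pair: "ew E {x,y} = \<bar>int (deg E x)^2 - int (deg E y)^2\<bar>"
  by (cases "x \<le> y") (auto simp: ew_def max_def min_def abs_minus_commute)

lemma sg_fin_E: "simple_graph n E \<Longrightarrow> finite E"
proof -
  assume "simple_graph n E"
  then have "E \<subseteq> Pow {..<n}" unfolding simple_graph_def by auto
  then show ?thesis using finite_subset by blast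
qed

lemma cM2_edges:
  assumes sg: "simple_graph n E" shows "cM2 E = (\<Sum>e\<in>E. ew E e)"
proof -
  let ?P = "{(u, v). {u, v} \<in> E \<and> u < v}"
  let ?f = "\<lambda>(x::nat,y). {x,y}"
  have inj: "inj_on ?f ?P" by (auto simp: inj_on_def doubleton_eq_iff)
  have img: "?f ` ?P = E"
  proof
    show "?f ` ?P \<subseteq> E" by auto
    show "E \<subseteq> ?f ` ?P"
    proof
      fix e assume e: "e \<in> E"
      then obtain x y where xy: "e = {x,y}" "x \<noteq> y" using sg unfolding simple_graph_def by blast
      show "e \<in> ?f ` ?P"
      proof (cases "x < y")
        case True then show ?thesis using e xy by (auto intro!: image_eqI[where x="(x,y)"])
      next
        case False then have "y < x" using xy by simp
        then show ?thesis using e xy by (auto intro!: image_eqI[where x="(y,x)"] simp: insert_commute)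
      qed
    qed
  qed
  have "cM2 E = (\<Sum>p\<in>?P. ew E (?f p))"
    unfolding cM2_def by (rule sum.cong) (auto simp: ew_pair)
  also have "\<dots> = (\<Sum>e\<in>?f ` ?P. ew E e)" using sum.reindex[OF inj, of "ew E"] by (simp add: comp_def)
  also have "\<dots> = (\<Sum>e\<in>E. ew E e)" using img by simp
  finally show ?thesis .
qed

lemma num_u: fixes a D :: int assumes "0 \<le> a" "0 \<le> D"
  shows "\<bar>(a+1)^2 - D^2\<bar> - \<bar>a^2 - D^2\<bar> \<ge> (2*a+1) * ((if D < a then 1 else 0) - (if D > a then 1 else 0))"
proof -
  consider "D < a" | "D = a" | "D \<ge> a + 1" by linarith
  then show ?thesis
  proof cases
    case 1
    then have "D^2 \<le> a^2" using assms by (simp add: power_mono)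
    then show ?thesis using 1 by (simp add: power2_eq_square algebra_simps)
  next
    case 2 then show ?thesis using assms by (simp add: power2_eq_square algebra_simps)
  next
    case 3
    then have "(a+1)^2 \<le> D^2" "a^2 \<le> D^2" using assms by (simp_all add: power_mono)
    then show ?thesis using 3 by (simp add: power2_eq_square algebra_simps abs_if)
  qed
qed

lemma num_v: fixes b D :: int assumes "1 \<le> b" "0 \<le> D"
  shows "\<bar>(b-1)^2 - D^2\<bar> - \<bar>b^2 - D^2\<bar> \<ge> (2*b-1) * ((if D > b then 1 else 0) - (if D < b then 1 else 0))"
proof -
  consider "D \<le> b - 1" | "D = b" | "D > b" by linarith
  then show ?thesis
  proof cases
    case 1
    then have "D^2 \<le> (b-1)^2" "D^2 \<le> b^2" using assms by (simp_all add: power_mono)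
    then show ?thesis using 1 by (simp add: power2_eq_square algebra_simps abs_if)
  next
    case 2 then show ?thesis using assms by (simp add: power2_eq_square algebra_simps)
  next
    case 3
    then have "b^2 \<le> D^2" using assms by (simp add: power_mono)
    then show ?thesis using 3 by (simp add: power2_eq_square algebra_simps)
  qed
qed

lemma num_final: fixes a b d :: int assumes "1 \<le> a" "a \<le> b" "b \<le> d"
  shows "0 < (\<bar>(a+1)^2 - d^2\<bar> - \<bar>b^2 - d^2\<bar>) + (\<bar>(a+1)^2 - (b-1)^2\<bar> - \<bar>a^2 - b^2\<bar>)
           + (if a < b then (2*a+1) + (2*b-1) else 0)"
proof (cases "a = b")
  case True
  consider "d = a" | "d \<ge> a + 1" using assms True by linarith
  then show ?thesis
  proof cases
    case 1 then show ?thesis using True assms by (simp add: power2_eq_square algebra_simps)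
  next
    case 2
    then have "(a+1)^2 \<le> d^2" using assms by (simp add: power_mono)
    then show ?thesis using True assms by (simp add: power2_eq_square algebra_simps)
  qed
next
  case False
  then have ab: "a + 1 \<le> b" using assms by linarith
  have s1: "(a+1)^2 \<le> d^2" using ab assms by (simp add: power_mono)
  have s2: "b^2 \<le> d^2" using assms by (simp add: power_mono)
  have s3: "a^2 \<le> b^2" using assms by (simp add: power_mono)
  consider "b = a + 1" | "a + 2 \<le> b" using ab by linarith
  then show ?thesis
  proof cases
    case 1 then show ?thesis using s1 s2 s3 assms by (simp add: power2_eq_square algebra_simps)
  next
    case 2
    then have s4: "(a+1)^2 \<le> (b-1)^2" using assms by (simp add: power_mono)
    have s5: "(a+1)^2 < b^2" using 2 assms by (simp add: power_strict_mono)
    show ?thesis using s1 s2 s3 s4 s5 2 by (simp add: power2_eq_square algebra_simps)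
  qed
qed

lemma main_delta:
  assumes sg: "simple_graph n E" and uX: "outdeg E u \<ge> indeg E u"
    and vY: "outdeg E v < indeg E v" and e: "{u,v} \<in> E" and ab: "deg E u \<le> deg E v"
    and wv: "w \<in> nb E v" and wu: "w \<noteq> u" and wnu: "w \<notin> nb E u" and dw: "deg E w \<ge> deg E v"
  shows "simple_graph n (insert {u,w} (E - {{v,w}})) \<and> cM2 E < cM2 (insert {u,w} (E - {{v,w}}))"
proof -
  define H where "H = insert {u,w} (E - {{v,w}})"
  have vw: "{v,w} \<in> E" using wv by (simp add: nb_def)
  have uvn: "u \<noteq> v" "u < n" "v < n" using sg_edge[OF sg e] by auto
  have vwn: "v \<noteq> w" "w < n" using sg_edge[OF sg vw] by auto
  have uwE: "{u,w} \<notin> E" using wnu by (simp add: nb_def)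
  have sgH: "simple_graph n H"
  proof -
    have "{u,w} \<in> {{x, y} |x y. x < n \<and> y < n \<and> x \<noteq> y}" using uvn vwn wu by blast
    then show ?thesis using sg unfolding simple_graph_def H_def by blast
  qed
  have fu: "finite (nb E u)" and fv: "finite (nb E v)" and fw: "finite (nb E w)" using sg_fin_nb[OF sg] by auto
  have nbHu: "nb H u = insert w (nb E u)"
    unfolding nb_def H_def using uvn vwn wu by (auto simp: doubleton_eq_iff)
  have nbHv: "nb H v = nb E v - {w}"
    unfolding nb_def H_def using uvn vwn wu by (auto simp: doubleton_eq_iff)
  have nbHw: "nb H w = insert u (nb E w - {v})"
    unfolding nb_def H_def using uvn vwn wu uwE by (auto simp: doubleton_eq_iff insert_commute)
  have nbHo: "\<And>x. x \<noteq> u \<Longrightarrow> x \<noteq> v \<Longrightarrow> x \<noteq> w \<Longrightarrow> nb H x = nb E x"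
    unfolding nb_def H_def using uvn vwn wu by (auto simp: doubleton_eq_iff)
  have degHu: "deg H u = deg E u + 1" using nbHu fu wnu by (simp add: deg_nb)
  have vu': "v \<in> nb E u" using e by (simp add: nb_def)
  have b1: "deg E v \<ge> 1" using wv fv by (auto simp: deg_nb Suc_le_eq card_gt_0_iff)
  have a1: "deg E u \<ge> 1" using vu' fu by (auto simp: deg_nb Suc_le_eq card_gt_0_iff)
  have degHv: "deg H v = deg E v - 1" using nbHv fv wv by (simp add: deg_nb)
  have degHw: "deg H w = deg E w"
  proof -
    have "v \<in> nb E w" "u \<notin> nb E w" using wv wnu nb_sym by metis+
    then have "card (nb E w) \<ge> 1" using fw by (auto simp: Suc_le_eq card_gt_0_iff)
    then show ?thesis using nbHw fw \<open>u \<notin> nb E w\<close> \<open>v \<in> nb E w\<close> by (simp add: deg_nb)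
  qed
  have degHo: "\<And>x. x \<noteq> u \<Longrightarrow> x \<noteq> v \<Longrightarrow> deg H x = deg E x"
    using nbHo degHw by (metis deg_nb)
  define a where "a = int (deg E u)"
  define b where "b = int (deg E v)"
  define d where "d = int (deg E w)"
  have fE: "finite E" using sg_fin_E[OF sg] .
  define E' where "E' = E - {{v,w}}"
  have fE': "finite E'" using fE by (simp add: E'_def)
  define dd where "dd e = ew H e - ew E e" for e
  have S1: "(\<Sum>e\<in>E. ew E e) = ew E {v,w} + (\<Sum>e\<in>E'. ew E e)"
    unfolding E'_def by (rule sum.remove[OF fE vw])
  have S2: "(\<Sum>e\<in>H. ew H e) = ew H {u,w} + (\<Sum>e\<in>E'. ew H e)"
    unfolding H_def E'_def by (rule sum.insert) (use fE uwE in auto)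
  define U where "U = {e\<in>E'. u \<in> e}"
  define V where "V = {e\<in>E'. u \<notin> e \<and> v \<in> e}"
  have S4: "(\<Sum>e\<in>E'. dd e) = (\<Sum>e\<in>U \<union> V. dd e)"
  proof (rule sum.mono_neutral_right[OF fE'])
    show "U \<union> V \<subseteq> E'" by (auto simp: U_def V_def)
    show "\<forall>e\<in>E' - (U \<union> V). dd e = 0"
    proof
      fix e assume e: "e \<in> E' - (U \<union> V)"
      then obtain x y where xy: "e = {x,y}" using sg unfolding simple_graph_def E'_def by blast
      have "x \<noteq> u" "x \<noteq> v" "y \<noteq> u" "y \<noteq> v" using e xy by (auto simp: U_def V_def)
      then show "dd e = 0" using xy by (simp add: dd_def ew_pair degHo)
    qed
  qed
  have S5: "(\<Sum>e\<in>U \<union> V. dd e) = (\<Sum>e\<in>U. dd e) + (\<Sum>e\<in>V. dd e)"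
    by (rule sum.union_disjoint) (use fE' in \<open>auto simp: U_def V_def\<close>)
  have Ueq: "U = (\<lambda>x. {u,x}) ` nb E u"
  proof
    show "U \<subseteq> (\<lambda>x. {u,x}) ` nb E u"
    proof
      fix e assume e: "e \<in> U"
      then obtain x y where xy: "e = {x,y}" using sg unfolding simple_graph_def U_def E'_def by blast
      show "e \<in> (\<lambda>x. {u,x}) ` nb E u"
      proof (cases "x = u")
        case True then show ?thesis using e xy by (auto simp: U_def E'_def nb_def)
      next
        case False then have "y = u" using e xy by (auto simp: U_def)
        then show ?thesis using e xy by (auto simp: U_def E'_def nb_def insert_commute)
      qed
    qed
    show "(\<lambda>x. {u,x}) ` nb E u \<subseteq> U"
      using uvn wu by (auto simp: U_def E'_def nb_def doubleton_eq_iff)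
  qed
  have Veq: "V = (\<lambda>y. {v,y}) ` (nb E v - {u} - {w})"
  proof
    show "V \<subseteq> (\<lambda>y. {v,y}) ` (nb E v - {u} - {w})"
    proof
      fix e assume e: "e \<in> V"
      then obtain x y where xy: "e = {x,y}" using sg unfolding simple_graph_def V_def E'_def by blast
      show "e \<in> (\<lambda>y. {v,y}) ` (nb E v - {u} - {w})"
      proof (cases "x = v")
        case True then show ?thesis using e xy by (auto simp: V_def E'_def nb_def)
      next
        case False then have "y = v" using e xy by (auto simp: V_def)
        then show ?thesis using e xy by (auto simp: V_def E'_def nb_def insert_commute)
      qed
    qed
    show "(\<lambda>y. {v,y}) ` (nb E v - {u} - {w}) \<subseteq> V"
    proof
      fix e assume "e \<in> (\<lambda>y. {v,y}) ` (nb E v - {u} - {w})"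
      then obtain y where y: "y \<in> nb E v" "y \<noteq> u" "y \<noteq> w" "e = {v,y}" by blast
      have "{v,y} \<noteq> {v,w}" using y(3) vwn(1) by (simp add: doubleton_eq_iff)
      moreover have "u \<notin> {v,y}" using y(2) uvn(1) by simp
      ultimately show "e \<in> V" using y by (simp add: V_def E'_def nb_def)
    qed
  qed
  have injU: "inj_on (\<lambda>x. {u,x}) (nb E u)" by (auto simp: inj_on_def doubleton_eq_iff)
  have injV: "inj_on (\<lambda>y. {v,y}) (nb E v - {u} - {w})" by (auto simp: inj_on_def doubleton_eq_iff)
  have S6: "(\<Sum>e\<in>U. dd e) = dd {u,v} + (\<Sum>x\<in>nb E u - {v}. dd {u,x})"
  proof -
    have "(\<Sum>e\<in>U. dd e) = (\<Sum>x\<in>nb E u. dd {u,x})"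
      unfolding Ueq using sum.reindex[OF injU, of dd] by (simp add: comp_def)
    also have "\<dots> = dd {u,v} + (\<Sum>x\<in>nb E u - {v}. dd {u,x})" by (rule sum.remove[OF fu vu'])
    finally show ?thesis .
  qed
  have S7: "(\<Sum>e\<in>V. dd e) = (\<Sum>y\<in>nb E v - {u} - {w}. dd {v,y})"
    unfolding Veq using sum.reindex[OF injV, of dd] by (simp add: comp_def)
  have diff: "cM2 H - cM2 E = (ew H {u,w} - ew E {v,w}) + dd {u,v} + (\<Sum>x\<in>nb E u - {v}. dd {u,x})
       + (\<Sum>y\<in>nb E v - {u} - {w}. dd {v,y})"
  proof -
    have "cM2 H - cM2 E = (ew H {u,w} - ew E {v,w}) + ((\<Sum>e\<in>E'. ew H e) - (\<Sum>e\<in>E'. ew E e))"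
      using cM2_edges[OF sg] cM2_edges[OF sgH] S1 S2 by simp
    also have "(\<Sum>e\<in>E'. ew H e) - (\<Sum>e\<in>E'. ew E e) = (\<Sum>e\<in>E'. dd e)"
      by (simp add: dd_def sum_subtractf)
    finally show ?thesis using S4 S5 S6 S7 by simp
  qed
  have ddUV: "dd {u,v} = \<bar>(a+1)^2 - (b-1)^2\<bar> - \<bar>a^2 - b^2\<bar>"
    using b1 by (simp add: dd_def ew_pair degHu degHv a_def b_def of_nat_diff add.commute)
  have ddW: "ew H {u,w} - ew E {v,w} = \<bar>(a+1)^2 - d^2\<bar> - \<bar>b^2 - d^2\<bar>"
    by (simp add: ew_pair degHu degHw a_def b_def d_def add.commute)
  have BU: "(\<Sum>x\<in>nb E u - {v}. dd {u,x}) \<ge> (2*a+1) * (if a < b then 1 else 0)"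
  proof -
    define tu where "tu x = (if deg E x < deg E u then 1 else 0) - (if deg E x > deg E u then 1 else 0 :: int)" for x
    have pw: "dd {u,x} \<ge> (2*a+1) * tu x" if x: "x \<in> nb E u - {v}" for x
    proof -
      have "x \<noteq> u" using x sg_edge[OF sg, of u x] by (auto simp: nb_def)
      then have "dd {u,x} = \<bar>(a+1)^2 - (int (deg E x))^2\<bar> - \<bar>a^2 - (int (deg E x))^2\<bar>"
        using x by (simp add: dd_def ew_pair degHu degHo a_def add.commute)
      also have "\<dots> \<ge> (2*a+1) * tu x" using num_u[of a "int (deg E x)"] by (simp add: a_def tu_def)
      finally show ?thesis .
    qed
    have tsum: "(\<Sum>x\<in>nb E u. tu x) = int (outdeg E u) - int (indeg E u)"
      unfolding tu_def sum_subtractf using card_filter_sum[OF fu] by (simp add: outdeg_eq indeg_eq)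
    have "(\<Sum>x\<in>nb E u. tu x) = tu v + (\<Sum>x\<in>nb E u - {v}. tu x)" by (rule sum.remove[OF fu vu'])
    moreover have "tu v = - (if a < b then 1 else 0)" using ab by (auto simp: tu_def a_def b_def)
    ultimately have t1: "(\<Sum>x\<in>nb E u - {v}. tu x) \<ge> (if a < b then 1 else 0)" using tsum uX by simp
    have a0: "0 \<le> 2*a+1" by (simp add: a_def)
    have "(2*a+1) * (if a < b then 1 else 0) \<le> (2*a+1) * (\<Sum>x\<in>nb E u - {v}. tu x)"
      by (rule mult_left_mono[OF t1 a0])
    also have "\<dots> = (\<Sum>x\<in>nb E u - {v}. (2*a+1) * tu x)" by (simp add: sum_distrib_left)
    also have "\<dots> \<le> (\<Sum>x\<in>nb E u - {v}. dd {u,x})" by (rule sum_mono) (use pw in auto)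
    finally show ?thesis .
  qed
  have BV: "(\<Sum>y\<in>nb E v - {u} - {w}. dd {v,y}) \<ge> (2*b-1) * (if a < b then 1 else 0)"
  proof -
    define tv where "tv x = (if deg E x > deg E v then 1 else 0) - (if deg E x < deg E v then 1 else 0 :: int)" for x
    have pw: "dd {v,x} \<ge> (2*b-1) * tv x" if x: "x \<in> nb E v - {u} - {w}" for x
    proof -
      have "x \<noteq> v" using x sg_edge[OF sg, of v x] by (auto simp: nb_def)
      then have "dd {v,x} = \<bar>(b-1)^2 - (int (deg E x))^2\<bar> - \<bar>b^2 - (int (deg E x))^2\<bar>"
        using x b1 by (simp add: dd_def ew_pair degHv degHo b_def of_nat_diff)
      also have "\<dots> \<ge> (2*b-1) * tv x" using num_v[of b "int (deg E x)"] b1 by (simp add: b_def tv_def)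
      finally show ?thesis .
    qed
    have tsum: "(\<Sum>x\<in>nb E v. tv x) = int (indeg E v) - int (outdeg E v)"
      unfolding tv_def sum_subtractf using card_filter_sum[OF fv] by (simp add: outdeg_eq indeg_eq)
    have uv': "u \<in> nb E v" using vu' nb_sym by metis
    have fv1: "finite (nb E v - {u})" using fv by simp
    have wv1: "w \<in> nb E v - {u}" using wv wu by simp
    have "(\<Sum>x\<in>nb E v. tv x) = tv u + (\<Sum>x\<in>nb E v - {u}. tv x)" by (rule sum.remove[OF fv uv'])
    moreover have "(\<Sum>x\<in>nb E v - {u}. tv x) = tv w + (\<Sum>x\<in>nb E v - {u} - {w}. tv x)" by (rule sum.remove[OF fv1 wv1])
    moreover have "tv u = - (if a < b then 1 else 0)" using ab by (auto simp: tv_def a_def b_def)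
    moreover have "tv w \<le> 1" by (simp add: tv_def)
    ultimately have t1: "(\<Sum>x\<in>nb E v - {u} - {w}. tv x) \<ge> (if a < b then 1 else 0)" using tsum vY by simp
    have b0: "0 \<le> 2*b-1" using b1 by (simp add: b_def)
    have "(2*b-1) * (if a < b then 1 else 0) \<le> (2*b-1) * (\<Sum>x\<in>nb E v - {u} - {w}. tv x)"
      by (rule mult_left_mono[OF t1 b0])
    also have "\<dots> = (\<Sum>x\<in>nb E v - {u} - {w}. (2*b-1) * tv x)" by (simp add: sum_distrib_left)
    also have "\<dots> \<le> (\<Sum>x\<in>nb E v - {u} - {w}. dd {v,x})" by (rule sum_mono) (use pw in auto)
    finally show ?thesis .
  qed
  have "0 < (\<bar>(a+1)^2 - d^2\<bar> - \<bar>b^2 - d^2\<bar>) + (\<bar>(a+1)^2 - (b-1)^2\<bar> - \<bar>a^2 - b^2\<bar>)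
           + (if a < b then (2*a+1) + (2*b-1) else 0)"
    by (rule num_final) (use a1 ab dw in \<open>auto simp: a_def b_def d_def\<close>)
  then have "0 < cM2 H - cM2 E" using diff ddUV ddW BU BV by (simp split: if_splits)
  then show ?thesis using sgH H_def by simp
qed

theorem corollary2:
  fixes n :: nat and E :: "nat set set" and u v :: nat
  assumes "simple_graph n E"
    and "\<forall>H. simple_graph n H \<longrightarrow> cM2 H \<le> cM2 E"
    and "u \<in> Xset n E" and "v \<in> Yset n E" and "{u, v} \<in> E"
  shows "arc E u v"
proof (rule ccontr)
  assume na: "\<not> arc E u v"
  have ab: "deg E u \<le> deg E v" using na assms(5) by (auto simp: arc_def)
  have uX: "outdeg E u \<ge> indeg E u" using assms(3) by (simp add: Xset_def)
  have vY: "outdeg E v < indeg E v" using assms(4) by (simp add: Yset_def)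
  obtain w where w: "w \<in> nb E v" "w \<noteq> u" "w \<notin> nb E u" "deg E w \<ge> deg E v"
    using exists_w[OF assms(1) uX vY assms(5) ab] by blast
  have "simple_graph n (insert {u,w} (E - {{v,w}})) \<and> cM2 E < cM2 (insert {u,w} (E - {{v,w}}))"
    by (rule main_delta[OF assms(1) uX vY assms(5) ab w])
  then show False using assms(2) by force
qed

end
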